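(* Let $p$ be a prime power and let $G(p)$ be the point–line incidence graph of a projective plane of order $p$: a bipartite graph on $n = 2(p^2+p+1)$ vertices whose parts are the $p^2+p+1$ points and the $p^2+p+1$ lines, a point being adjacent to a line iff it lies on the line (so $G(p)$ is $(p+1)$-regular and contains no $K_{2,2}$). Then $$\chi_{2K_2}(G(p)) \ge \sqrt{\frac{2(p^2+p+1)(p+1)}{2p+1}} + \frac12 \ge \sqrt{\frac n2 + \frac{\sqrt n}{4}} + \frac12.$$
   Context: All graphs are finite and simple. For a fixed bipartite graph $H$, a proper vertex coloring of a graph $G$ is called an $H$-avoiding coloring if for any two color classes, the subgraph of $G$ induced by their union contains no induced subgraph isomorphic to $H$. $\chi_H(G)$ denotes the minimum number of colors in an $H$-avoiding coloring of $G$. $2K_2$ is the disjoint union of two edges. *)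

theory Defs
  imports Complex_Main "HOL-Computational_Algebra.Primes"
begin

definition simple_graph :: "'v set \<Rightarrow> ('v \<Rightarrow> 'v \<Rightarrow> bool) \<Rightarrow> bool" where
  "simple_graph V E \<longleftrightarrow> finite V \<and> (\<forall>x y. E x y \<longrightarrow> x \<in> V \<and> y \<in> V)
     \<and> (\<forall>x y. E x y \<longrightarrow> E y x) \<and> (\<forall>x. \<not> E x x)"

definition has_induced_2K2 :: "('v \<Rightarrow> 'v \<Rightarrow> bool) \<Rightarrow> 'v set \<Rightarrow> bool" where
  "has_induced_2K2 E S \<longleftrightarrow> (\<exists>a\<in>S. \<exists>b\<in>S. \<exists>c\<in>S. \<exists>d\<in>S.
      distinct [a, b, c, d] \<and> E a b \<and> E c d \<and>
      \<not> E a c \<and> \<not> E a d \<and> \<not> E b c \<and> \<not> E b d)"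

definition avoiding_2K2_coloring :: "'v set \<Rightarrow> ('v \<Rightarrow> 'v \<Rightarrow> bool) \<Rightarrow> nat \<Rightarrow> ('v \<Rightarrow> nat) \<Rightarrow> bool" where
  "avoiding_2K2_coloring V E k f \<longleftrightarrow>
     (\<forall>v\<in>V. f v < k) \<and>
     (\<forall>x\<in>V. \<forall>y\<in>V. E x y \<longrightarrow> f x \<noteq> f y) \<and>
     (\<forall>i j. \<not> has_induced_2K2 E {v\<in>V. f v = i \<or> f v = j})"

definition chi_2K2 :: "'v set \<Rightarrow> ('v \<Rightarrow> 'v \<Rightarrow> bool) \<Rightarrow> nat" where
  "chi_2K2 V E = (LEAST k. \<exists>f. avoiding_2K2_coloring V E k f)"

definition prime_power :: "nat \<Rightarrow> bool" where
  "prime_power p \<longleftrightarrow> (\<exists>q k. prime q \<and> k \<ge> 1 \<and> p = q ^ k)"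

definition projective_plane_of_order ::
    "'p set \<Rightarrow> 'l set \<Rightarrow> ('p \<Rightarrow> 'l \<Rightarrow> bool) \<Rightarrow> nat \<Rightarrow> bool" where
  "projective_plane_of_order P L inc ord \<longleftrightarrow>
     finite P \<and> finite L \<and>
     (\<forall>a\<in>P. \<forall>b\<in>P. a \<noteq> b \<longrightarrow> (\<exists>!l. l \<in> L \<and> inc a l \<and> inc b l)) \<and>
     (\<forall>l\<in>L. \<forall>m\<in>L. l \<noteq> m \<longrightarrow> (\<exists>!a. a \<in> P \<and> inc a l \<and> inc a m)) \<and>
     (\<exists>a\<in>P. \<exists>b\<in>P. \<exists>c\<in>P. \<exists>d\<in>P. distinct [a, b, c, d] \<and>
        (\<forall>l\<in>L. card ({a, b, c, d} \<inter> {x. inc x l}) \<le> 2)) \<and>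
     (\<forall>l\<in>L. card {a\<in>P. inc a l} = ord + 1)"

definition incidence_vertices :: "'p set \<Rightarrow> 'l set \<Rightarrow> ('p + 'l) set" where
  "incidence_vertices P L = Inl ` P \<union> Inr ` L"

definition incidence_edge :: "'p set \<Rightarrow> 'l set \<Rightarrow> ('p \<Rightarrow> 'l \<Rightarrow> bool) \<Rightarrow> ('p + 'l) \<Rightarrow> ('p + 'l) \<Rightarrow> bool" where
  "incidence_edge P L inc x y \<longleftrightarrow>
     (\<exists>a\<in>P. \<exists>l\<in>L. inc a l \<and> ((x = Inl a \<and> y = Inr l) \<or> (x = Inr l \<and> y = Inl a)))"

end

theory Submission
  imports Defs
begin


lemma card_two_le: assumes "finite S" "x \<in> S" "y \<in> S" "x \<noteq> y" shows "2 \<le> card S"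
proof -
  have "card {x,y} \<le> card S" using assms by (intro card_mono) auto
  thus ?thesis using assms by simp
qed

lemma card_other: assumes "finite S" "2 \<le> card S" shows "\<exists>y\<in>S. y \<noteq> x"
proof (rule ccontr)
  assume "\<not> ?thesis"
  hence "S \<subseteq> {x}" by auto
  hence "card S \<le> 1" using card_mono[of "{x}" S] by simp
  thus False using assms by simp
qed

lemma double_star_bound:
  fixes H :: "('a \<times> 'b) set"
  assumes fin: "finite H" and ne: "H \<noteq> {}"
  and dA: "\<And>a. card {b. (a,b) \<in> H} \<le> D"
  and dB: "\<And>b. card {a. (a,b) \<in> H} \<le> D"
  and c4: "\<And>a1 a2 b1 b2. (a1,b1)\<in>H \<Longrightarrow> (a1,b2)\<in>H \<Longrightarrow> (a2,b1)\<in>H \<Longrightarrow> (a2,b2)\<in>H \<Longrightarrow> a1 = a2 \<or> b1 = b2"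
  and k2: "\<And>a1 a2 b1 b2. (a1,b1)\<in>H \<Longrightarrow> (a2,b2)\<in>H \<Longrightarrow> a1 \<noteq> a2 \<Longrightarrow> b1 \<noteq> b2 \<Longrightarrow> (a1,b2)\<in>H \<or> (a2,b1)\<in>H"
  shows "card H + 1 \<le> 2 * D"
proof -
  define NA where "NA a = {b. (a,b) \<in> H}" for a
  define NB where "NB b = {a. (a,b) \<in> H}" for b
  have finA: "finite (NA a)" for a
    unfolding NA_def by (rule finite_subset[of _ "snd ` H"]) (force, simp add: fin)
  have finB: "finite (NB b)" for b
    unfolding NB_def by (rule finite_subset[of _ "fst ` H"]) (force, simp add: fin)
  define g where "g = (\<lambda>(a,b). card (NA a) + card (NB b))"
  have "Max (g ` H) \<in> g ` H" using fin ne by simp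
  then obtain z where zH: "z \<in> H" and gz: "g z = Max (g ` H)" by auto
  obtain a0 b0 where z: "z = (a0,b0)" by (cases z)
  have e0: "(a0,b0) \<in> H" using zH z by simp
  have mx: "g x \<le> g (a0,b0)" if "x \<in> H" for x
    using that fin gz z by simp
  have cover: "a = a0 \<or> b = b0" if ab: "(a,b) \<in> H" for a b
  proof (rule ccontr)
    assume nn: "\<not> (a = a0 \<or> b = b0)"
    from k2[OF e0 ab] nn have "(a0,b) \<in> H \<or> (a,b0) \<in> H" by auto
    thus False
    proof
      assume h: "(a0,b) \<in> H"
      have "2 \<le> card (NB b)" using card_two_le[OF finB, of a b a0] h ab nn by (auto simp: NB_def)
      moreover have "g (a0,b) \<le> g (a0,b0)" using mx h .
      ultimately have "2 \<le> card (NB b0)" by (simp add: g_def)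
      then obtain a' where a': "a' \<in> NB b0" "a' \<noteq> a0" using card_other[OF finB] by blast
      have a'H: "(a',b0) \<in> H" using a' by (simp add: NB_def)
      have nab0: "(a,b0) \<notin> H" using c4[OF ab _ h e0] nn by auto
      have "a' \<noteq> a" using a'H nab0 by auto
      from k2[OF a'H ab this] nn nab0 have "(a',b) \<in> H" by auto
      from c4[OF this a'H h e0] a' nn show False by auto
    next
      assume h: "(a,b0) \<in> H"
      have "2 \<le> card (NA a)" using card_two_le[OF finA, of b0 a b] h ab nn by (auto simp: NA_def)
      moreover have "g (a,b0) \<le> g (a0,b0)" using mx h .
      ultimately have "2 \<le> card (NA a0)" by (simp add: g_def)
      then obtain b' where b': "b' \<in> NA a0" "b' \<noteq> b0" using card_other[OF finA] by blast
      have b'H: "(a0,b') \<in> H" using b' by (simp add: NA_def)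
      have na0b: "(a0,b) \<notin> H" using c4[OF ab h _ e0] nn by auto
      have "b' \<noteq> b" using b'H na0b by auto
      from k2[OF b'H ab _ this] nn na0b have "(a,b') \<in> H" by auto
      from c4[OF this h b'H e0] b' nn show False by auto
    qed
  qed
  define S1 where "S1 = Pair a0 ` NA a0"
  define S2 where "S2 = (\<lambda>a. (a,b0)) ` NB b0"
  have sub: "H \<subseteq> S1 \<union> S2" using cover by (force simp: S1_def S2_def NA_def NB_def)
  have f1: "finite S1" "finite S2" using finA finB by (auto simp: S1_def S2_def)
  have "card H \<le> card (S1 \<union> S2)" using sub f1 by (intro card_mono) auto
  moreover have "card S1 + card S2 = card (S1 \<union> S2) + card (S1 \<inter> S2)"
    using f1 card_Un_Int by blast
  moreover have "1 \<le> card (S1 \<inter> S2)"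
  proof -
    have "(a0,b0) \<in> S1 \<inter> S2" using e0 by (auto simp: S1_def S2_def NA_def NB_def)
    hence "S1 \<inter> S2 \<noteq> {}" by blast
    thus ?thesis using f1 by (simp add: Suc_le_eq card_gt_0_iff)
  qed
  moreover have "card S1 \<le> D" unfolding S1_def using card_image_le[OF finA] dA[of a0] NA_def
    by (metis le_trans)
  moreover have "card S2 \<le> D" unfolding S2_def using card_image_le[OF finB] dB[of b0] NB_def
    by (metis le_trans)
  ultimately show ?thesis by linarith
qed



context
  fixes P :: "'p set" and L :: "'l set" and inc :: "'p \<Rightarrow> 'l \<Rightarrow> bool" and p :: nat
  assumes pp: "projective_plane_of_order P L inc p"
begin

lemma pp_fin: "finite P" "finite L" using pp by (auto simp: projective_plane_of_order_def)

lemma pp_line_ex1: "a \<in> P \<Longrightarrow> b \<in> P \<Longrightarrow> a \<noteq> b \<Longrightarrow> \<exists>!l. l \<in> L \<and> inc a l \<and> inc b l"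
  using pp by (auto simp: projective_plane_of_order_def)

lemma pp_point_ex1: "l \<in> L \<Longrightarrow> m \<in> L \<Longrightarrow> l \<noteq> m \<Longrightarrow> \<exists>!a. a \<in> P \<and> inc a l \<and> inc a m"
  using pp by (auto simp: projective_plane_of_order_def)

lemma pp_line_card: "l \<in> L \<Longrightarrow> card {a\<in>P. inc a l} = p + 1"
  using pp by (auto simp: projective_plane_of_order_def)

lemma pp_line_uniq: "a \<in> P \<Longrightarrow> b \<in> P \<Longrightarrow> a \<noteq> b \<Longrightarrow> l \<in> L \<Longrightarrow> m \<in> L \<Longrightarrow>
   inc a l \<Longrightarrow> inc b l \<Longrightarrow> inc a m \<Longrightarrow> inc b m \<Longrightarrow> l = m"
  using pp_line_ex1[of a b] by auto

lemma pp_point_uniq: "l \<in> L \<Longrightarrow> m \<in> L \<Longrightarrow> l \<noteq> m \<Longrightarrow> a \<in> P \<Longrightarrow> b \<in> P \<Longrightarrow>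
   inc a l \<Longrightarrow> inc a m \<Longrightarrow> inc b l \<Longrightarrow> inc b m \<Longrightarrow> a = b"
  using pp_point_ex1[of l m] by auto

lemma pp_missing_line:
  assumes aP: "a \<in> P" shows "\<exists>l0\<in>L. \<not> inc a l0"
proof -
  obtain q1 q2 q3 q4 where q: "q1 \<in> P" "q2 \<in> P" "q3 \<in> P" "q4 \<in> P" "distinct [q1,q2,q3,q4]"
    and c2: "\<forall>l\<in>L. card ({q1,q2,q3,q4} \<inter> {x. inc x l}) \<le> 2"
    using pp unfolding projective_plane_of_order_def by (elim conjE bexE) (rule that, assumption+)
  have three: False if "l \<in> L" "x \<in> {q1,q2,q3,q4}" "y \<in> {q1,q2,q3,q4}" "z \<in> {q1,q2,q3,q4}"
     "distinct [x,y,z]" "inc x l" "inc y l" "inc z l" for l x y z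
  proof -
    have "card {x,y,z} \<le> card ({q1,q2,q3,q4} \<inter> {x. inc x l})"
      using that by (intro card_mono) auto
    moreover have "card {x,y,z} = 3" using that by simp
    ultimately show False using c2 that(1) by fastforce
  qed
  show ?thesis
  proof (rule ccontr)
    assume H: "\<not> ?thesis"
    obtain l12 where l12: "l12 \<in> L" "inc q1 l12" "inc q2 l12" using pp_line_ex1[of q1 q2] q by auto
    obtain l34 where l34: "l34 \<in> L" "inc q3 l34" "inc q4 l34" using pp_line_ex1[of q3 q4] q by auto
    obtain l13 where l13: "l13 \<in> L" "inc q1 l13" "inc q3 l13" using pp_line_ex1[of q1 q3] q by auto
    have "l12 \<noteq> l13" using three[of l12 q1 q2 q3] l12 l13 q by auto
    hence "a = q1" using pp_point_uniq[of l12 l13 a q1] H l12 l13 q aP by auto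
    thus False using three[of l34 q1 q3 q4] H l34 q by auto
  qed
qed

lemma pp_degree:
  assumes aP: "a \<in> P" shows "card {l\<in>L. inc a l} = p + 1"
proof -
  obtain l0 where l0: "l0 \<in> L" "\<not> inc a l0" using pp_missing_line[OF aP] by blast
  define psi where "psi l = (THE x. x \<in> P \<and> inc x l \<and> inc x l0)" for l
  define phi where "phi x = (THE l. l \<in> L \<and> inc a l \<and> inc x l)" for x
  have psi: "psi l \<in> P \<and> inc (psi l) l \<and> inc (psi l) l0" if "l \<in> L" "inc a l" for l
  proof -
    have "l \<noteq> l0" using that l0 by auto
    from theI'[OF pp_point_ex1[OF that(1) l0(1) this]] show ?thesis by (simp add: psi_def)
  qed
  have phi: "phi x \<in> L \<and> inc a (phi x) \<and> inc x (phi x)" if "x \<in> P" "inc x l0" for x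
  proof -
    have "a \<noteq> x" using that l0 by auto
    from theI'[OF pp_line_ex1[OF aP that(1) this]] show ?thesis by (simp add: phi_def)
  qed
  have "card {l\<in>L. inc a l} \<le> card {x\<in>P. inc x l0}"
  proof (rule card_inj_on_le[of psi])
    show "inj_on psi {l \<in> L. inc a l}"
    proof (rule inj_onI)
      fix l m assume "l \<in> {l \<in> L. inc a l}" "m \<in> {l \<in> L. inc a l}" "psi l = psi m"
      thus "l = m" using psi[of l] psi[of m] pp_line_uniq[of a "psi l" l m] aP l0 by fastforce
    qed
    show "psi ` {l \<in> L. inc a l} \<subseteq> {x \<in> P. inc x l0}" using psi by auto
    show "finite {x \<in> P. inc x l0}" using pp_fin by simp
  qed
  moreover have "card {x\<in>P. inc x l0} \<le> card {l\<in>L. inc a l}"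
  proof (rule card_inj_on_le[of phi])
    show "inj_on phi {x \<in> P. inc x l0}"
    proof (rule inj_onI)
      fix x y assume xy: "x \<in> {x \<in> P. inc x l0}" "y \<in> {x \<in> P. inc x l0}" "phi x = phi y"
      show "x = y"
      proof (rule ccontr)
        assume "x \<noteq> y"
        hence "phi x = l0" using phi[of x] phi[of y] xy pp_line_uniq[of x y "phi x" l0] l0 by auto
        thus False using phi[of x] xy l0 by auto
      qed
    qed
    show "phi ` {x \<in> P. inc x l0} \<subseteq> {l \<in> L. inc a l}" using phi by auto
    show "finite {l \<in> L. inc a l}" using pp_fin by simp
  qed
  ultimately show ?thesis using pp_line_card[OF l0(1)] by simp
qed

lemma pp_nonempty: "P \<noteq> {}"
  using pp unfolding projective_plane_of_order_def by auto

lemma pp_points: "p^2 + p + 1 \<le> card P"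
proof -
  obtain a where aP: "a \<in> P" using pp_nonempty by auto
  define La where "La = {l\<in>L. inc a l}"
  define S where "S l = {x\<in>P. inc x l} - {a}" for l
  have finLa: "finite La" using pp_fin by (simp add: La_def)
  have cS: "card (S l) = p" if "l \<in> La" for l
  proof -
    have l: "l \<in> L" "inc a l" using that by (auto simp: La_def)
    have "card (S l) = card {x\<in>P. inc x l} - 1" unfolding S_def
      by (rule card_Diff_singleton) (use l aP in auto)
    thus ?thesis using pp_line_card[OF l(1)] by simp
  qed
  have "card (\<Union>l\<in>La. S l) = (\<Sum>l\<in>La. card (S l))"
  proof (rule card_UN_disjoint[OF finLa])
    show "\<forall>l\<in>La. finite (S l)" using pp_fin by (simp add: S_def)
    show "\<forall>l\<in>La. \<forall>m\<in>La. l \<noteq> m \<longrightarrow> S l \<inter> S m = {}"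
    proof (intro ballI impI)
      fix l m assume lm: "l \<in> La" "m \<in> La" "l \<noteq> m"
      show "S l \<inter> S m = {}"
      proof (rule ccontr)
        assume "S l \<inter> S m \<noteq> {}"
        then obtain x where x: "x \<in> P" "inc x l" "inc x m" "x \<noteq> a" by (auto simp: S_def)
        have "l = m" using pp_line_uniq[of a x l m] x aP lm by (auto simp: La_def)
        thus False using lm by simp
      qed
    qed
  qed
  also have "\<dots> = (\<Sum>l\<in>La. p)" by (rule sum.cong) (use cS in auto)
  also have "\<dots> = card La * p" by simp
  also have "\<dots> = (p+1) * p" using pp_degree[OF aP] by (simp add: La_def)
  finally have eq: "card (\<Union>l\<in>La. S l) = (p+1)*p" .
  have "(\<Union>l\<in>La. S l) \<subseteq> P - {a}" by (auto simp: S_def)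
  hence "card (\<Union>l\<in>La. S l) \<le> card (P - {a})" using pp_fin by (intro card_mono) auto
  also have "\<dots> = card P - 1" using aP by simp
  finally have "(p+1)*p \<le> card P - 1" using eq by simp
  moreover have "card P \<ge> 1" using aP pp_fin(1) card_gt_0_iff[of P] by auto
  ultimately have "(p+1)*p + 1 \<le> card P" by linarith
  moreover have "(p+1)*p + 1 = p^2 + p + 1" by (simp add: power2_eq_square algebra_simps)
  ultimately show ?thesis by simp
qed

end


lemma inc_edge_simps:
  "incidence_edge P L inc (Inl a) (Inr l) \<longleftrightarrow> a\<in>P \<and> l\<in>L \<and> inc a l"
  "incidence_edge P L inc (Inr l) (Inl a) \<longleftrightarrow> a\<in>P \<and> l\<in>L \<and> inc a l"
  "\<not> incidence_edge P L inc (Inl a) (Inl b)"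
  "\<not> incidence_edge P L inc (Inr l) (Inr m)"
  by (auto simp: incidence_edge_def)

lemma pair_eq_iff_mem: "(x::nat) \<noteq> y \<Longrightarrow> i \<noteq> j \<Longrightarrow> ({x,y} = {i,j} \<longleftrightarrow> x \<in> {i,j} \<and> y \<in> {i,j})"
  by (auto simp: doubleton_eq_iff)

theorem corollary6:
  fixes P :: "'p set" and L :: "'l set" and inc :: "'p \<Rightarrow> 'l \<Rightarrow> bool" and p :: nat
  assumes "prime_power p"
    and "projective_plane_of_order P L inc p"
  defines "n \<equiv> 2 * (p^2 + p + 1)"
  shows "real (chi_2K2 (incidence_vertices P L) (incidence_edge P L inc))
           \<ge> sqrt (2 * real (p^2 + p + 1) * real (p + 1) / real (2 * p + 1)) + 1/2
       \<and> sqrt (2 * real (p^2 + p + 1) * real (p + 1) / real (2 * p + 1)) + 1/2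
           \<ge> sqrt (real n / 2 + sqrt (real n) / 4) + 1/2"
proof -
  note pp = assms(2)
  define V where "V = incidence_vertices P L"
  define E where "E = incidence_edge P L inc"
  have finV: "finite V" using pp_fin[OF pp] by (simp add: V_def incidence_vertices_def)
  have Ediff: "x \<noteq> y" if "E x y" for x y
    using that by (auto simp: E_def incidence_edge_def)
  obtain h where hb: "bij_betw h V {0..<card V}" using ex_bij_betw_finite_nat[OF finV] by blast
  have "avoiding_2K2_coloring V E (card V) h"
    unfolding avoiding_2K2_coloring_def
  proof (intro conjI allI ballI impI)
    fix v assume "v \<in> V" thus "h v < card V" using hb by (auto simp: bij_betw_def)
  next
    fix x y assume "x \<in> V" "y \<in> V" "E x y"
    thus "h x \<noteq> h y" using hb Ediff by (auto simp: bij_betw_def inj_on_def)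
  next
    fix i j
    show "\<not> has_induced_2K2 E {v \<in> V. h v = i \<or> h v = j}"
    proof
      assume "has_induced_2K2 E {v \<in> V. h v = i \<or> h v = j}"
      then obtain a b c where abc: "a \<in> V" "b \<in> V" "c \<in> V" "h a \<in> {i,j}" "h b \<in> {i,j}" "h c \<in> {i,j}"
        "a \<noteq> b" "a \<noteq> c" "b \<noteq> c"
        unfolding has_induced_2K2_def by auto
      have inj: "inj_on h V" using hb by (simp add: bij_betw_def)
      have "h a = h b \<or> h a = h c \<or> h b = h c" using abc(4-6) by auto
      thus False using inj abc by (auto dest: inj_onD)
    qed
  qed
  hence ex: "\<exists>k f. avoiding_2K2_coloring V E k f" by blast
  define k where "k = chi_2K2 V E"
  obtain f where fcol: "avoiding_2K2_coloring V E k f"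
    using LeastI_ex[of "\<lambda>k. \<exists>f. avoiding_2K2_coloring V E k f"] ex
    unfolding k_def chi_2K2_def by blast
  have fk: "f v < k" if "v \<in> V" for v using fcol that by (simp add: avoiding_2K2_coloring_def)
  have fprop: "f x \<noteq> f y" if "x \<in> V" "y \<in> V" "E x y" for x y
    using fcol that by (simp add: avoiding_2K2_coloring_def)
  have fno: "\<not> has_induced_2K2 E {v \<in> V. f v = i \<or> f v = j}" for i j
    using fcol by (simp add: avoiding_2K2_coloring_def)
  have inV: "Inl a \<in> V" "Inr l \<in> V" if "a \<in> P" "l \<in> L" for a l
    using that by (auto simp: V_def incidence_vertices_def)
  have fdiff: "f (Inl a) \<noteq> f (Inr l)" if "a \<in> P" "l \<in> L" "inc a l" for a l
    using fprop[OF inV(1)[OF that(1,2)] inV(2)[OF that(1,2)]] that by (simp add: E_def inc_edge_simps)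

  define EE where "EE = Sigma P (\<lambda>a. {l\<in>L. inc a l})"
  have finEE: "finite EE" using pp_fin[OF pp] by (simp add: EE_def)
  have cardEE: "card EE = card P * (p+1)"
  proof -
    have "card EE = (\<Sum>a\<in>P. card {l\<in>L. inc a l})"
      unfolding EE_def using pp_fin[OF pp] by (intro card_SigmaI) auto
    also have "\<dots> = (\<Sum>a\<in>P. p + 1)" by (rule sum.cong) (use pp_degree[OF pp] in auto)
    finally show ?thesis by simp
  qed
  define g where "g = (\<lambda>(a,l). {f (Inl a), f (Inr l)})"
  define Q where "Q = {S. S \<subseteq> {0..<k} \<and> card S = 2}"
  have finQ: "finite Q" unfolding Q_def by (rule finite_subset[of _ "Pow {0..<k}"]) auto
  have cardQ: "card Q = k choose 2" unfolding Q_def using n_subsets[of "{0..<k}" 2] by simp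
  have gQ: "g ` EE \<subseteq> Q"
  proof
    fix S assume "S \<in> g ` EE"
    then obtain a l where al: "a \<in> P" "l \<in> L" "inc a l" "S = {f (Inl a), f (Inr l)}"
      by (auto simp: EE_def g_def)
    show "S \<in> Q" using al fdiff[OF al(1-3)] fk[OF inV(1)[OF al(1,2)]] fk[OF inV(2)[OF al(1,2)]]
      by (auto simp: Q_def)
  qed
  have "(\<Sum>S\<in>Q. sum (\<lambda>_. 1::nat) {x. x \<in> EE \<and> g x = S}) = sum (\<lambda>_. 1) EE"
    by (rule sum.group[OF finEE finQ gQ])
  hence sumfib: "card EE = (\<Sum>S\<in>Q. card {x. x \<in> EE \<and> g x = S})" by simp
  have fib: "card {x. x \<in> EE \<and> g x = S} \<le> 2*p+1" if SQ: "S \<in> Q" for S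
  proof -
    obtain i j where S: "S = {i,j}" "i \<noteq> j" using SQ card_2_iff[of S] by (auto simp: Q_def)
    define H where "H = {x. x \<in> EE \<and> g x = S}"
    have memH: "(a,l) \<in> H \<longleftrightarrow> a \<in> P \<and> l \<in> L \<and> inc a l \<and> f (Inl a) \<in> {i,j} \<and> f (Inr l) \<in> {i,j}" for a l
    proof
      assume "(a,l) \<in> H"
      thus "a \<in> P \<and> l \<in> L \<and> inc a l \<and> f (Inl a) \<in> {i,j} \<and> f (Inr l) \<in> {i,j}"
        by (auto simp: H_def EE_def g_def S doubleton_eq_iff)
    next
      assume A: "a \<in> P \<and> l \<in> L \<and> inc a l \<and> f (Inl a) \<in> {i,j} \<and> f (Inr l) \<in> {i,j}"
      hence "{f (Inl a), f (Inr l)} = {i,j}" using pair_eq_iff_mem[OF fdiff S(2)] by blast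
      thus "(a,l) \<in> H" using A by (auto simp: H_def EE_def g_def S)
    qed
    show ?thesis
    proof (cases "H = {}")
      case True show ?thesis unfolding H_def[symmetric] using True by simp
    next
      case False
      have finH: "finite H" using finEE by (simp add: H_def)
      have "card H + 1 \<le> 2 * (p+1)"
      proof (rule double_star_bound[OF finH False])
        fix a show "card {l. (a,l) \<in> H} \<le> p + 1"
        proof (cases "a \<in> P")
          case True
          have "card {l. (a,l) \<in> H} \<le> card {l\<in>L. inc a l}"
            using pp_fin[OF pp] memH by (intro card_mono) auto
          thus ?thesis using pp_degree[OF pp True] by simp
        next
          case False thus ?thesis using memH by simp
        qed
      next
        fix l show "card {a. (a,l) \<in> H} \<le> p + 1"
        proof (cases "l \<in> L")
          case True
          have "card {a. (a,l) \<in> H} \<le> card {a\<in>P. inc a l}"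
            using pp_fin[OF pp] memH by (intro card_mono) auto
          thus ?thesis using pp_line_card[OF pp True] by simp
        next
          case False thus ?thesis using memH by simp
        qed
      next
        fix a1 a2 b1 b2 assume "(a1,b1)\<in>H" "(a1,b2)\<in>H" "(a2,b1)\<in>H" "(a2,b2)\<in>H"
        thus "a1 = a2 \<or> b1 = b2" using pp_line_uniq[OF pp, of a1 a2 b1 b2] memH by auto
      next
        fix a1 a2 b1 b2 assume h1: "(a1,b1)\<in>H" and h2: "(a2,b2)\<in>H" and d: "a1 \<noteq> a2" "b1 \<noteq> b2"
        let ?X = "{v \<in> V. f v = i \<or> f v = j}"
        have m1: "a1 \<in> P" "b1 \<in> L" "inc a1 b1" "f (Inl a1) \<in> {i,j}" "f (Inr b1) \<in> {i,j}"
          using h1 memH by auto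
        have m2: "a2 \<in> P" "b2 \<in> L" "inc a2 b2" "f (Inl a2) \<in> {i,j}" "f (Inr b2) \<in> {i,j}"
          using h2 memH by auto
        have X: "Inl a1 \<in> ?X" "Inr b1 \<in> ?X" "Inl a2 \<in> ?X" "Inr b2 \<in> ?X"
          using m1 m2 inV by auto
        have dist: "distinct [Inl a1, Inr b1, Inl a2, Inr b2]" using d by auto
        have "E (Inl a1) (Inr b2) \<or> E (Inr b1) (Inl a2)"
        proof (rule ccontr)
          assume nn: "\<not> ?thesis"
          have e1: "E (Inl a1) (Inr b1)" "E (Inl a2) (Inr b2)" using m1 m2 by (simp_all add: E_def inc_edge_simps)
          have e2: "\<not> E (Inl a1) (Inl a2)" "\<not> E (Inr b1) (Inr b2)" by (simp_all add: E_def inc_edge_simps)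
          have e3: "\<not> E (Inl a1) (Inr b2)" "\<not> E (Inr b1) (Inl a2)" using nn by auto
          have "has_induced_2K2 E ?X"
            unfolding has_induced_2K2_def
            apply (rule bexI[OF _ X(1)], rule bexI[OF _ X(2)], rule bexI[OF _ X(3)], rule bexI[OF _ X(4)])
            using dist e1 e2 e3 by simp
          thus False using fno by blast
        qed
        hence "inc a1 b2 \<or> inc a2 b1" by (auto simp: E_def inc_edge_simps)
        thus "(a1,b2)\<in>H \<or> (a2,b1)\<in>H" using memH m1 m2 by auto
      qed
      thus ?thesis unfolding H_def[symmetric] by simp
    qed
  qed
  have "card EE \<le> card Q * (2*p+1)"
    using sumfib sum_bounded_above[of Q "\<lambda>S. card {x. x \<in> EE \<and> g x = S}" "2*p+1", OF fib] by simp
  hence "card P * (p+1) \<le> (k choose 2) * (2*p+1)" using cardEE cardQ by simp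
  moreover have "2 * (k choose 2) \<le> k * (k - 1)" by (simp add: choose_two)
  ultimately have "2 * (card P * (p+1)) \<le> k * (k - 1) * (2*p+1)"
  proof -
    assume a1: "card P * (p+1) \<le> (k choose 2) * (2*p+1)" and a2: "2 * (k choose 2) \<le> k * (k - 1)"
    have "2 * (card P * (p+1)) \<le> 2 * ((k choose 2) * (2*p+1))" using a1 by simp
    also have "\<dots> = (2 * (k choose 2)) * (2*p+1)" by (simp only: mult.assoc)
    also have "\<dots> \<le> k * (k - 1) * (2*p+1)" using a2 by (rule mult_le_mono1)
    finally show ?thesis .
  qed
  moreover have "(p^2+p+1) * (p+1) \<le> card P * (p+1)" using pp_points[OF pp] by (rule mult_le_mono1)
  ultimately have key: "2 * (p^2+p+1) * (p+1) \<le> k * (k - 1) * (2*p+1)" by linarith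
  have k1: "k \<ge> 1"
  proof (rule ccontr)
    assume "\<not> k \<ge> 1" hence "k = 0" by simp
    thus False using key by simp
  qed
  define N where "N = real (p^2+p+1)"
  define X where "X = 2 * N * real (p+1) / real (2*p+1)"
  have keyr: "2 * N * real (p+1) \<le> real k * (real k - 1) * real (2*p+1)"
  proof -
    have "real (2 * (p^2+p+1) * (p+1)) \<le> real (k * (k - 1) * (2*p+1))" using key by (simp only: of_nat_le_iff)
    moreover have "real (2 * (p^2+p+1) * (p+1)) = 2 * N * real (p+1)" by (simp add: N_def algebra_simps power2_eq_square)
    moreover have "real (k * (k - 1) * (2*p+1)) = real k * (real k - 1) * real (2*p+1)"
    proof -
      have "real (k - 1) = real k - 1" using k1 by (simp add: of_nat_diff)
      thus ?thesis by (simp only: of_nat_mult)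
    qed
    ultimately show ?thesis by simp
  qed
  have pos: "real (2*p+1) > 0" by simp
  have XL: "X \<le> real k * (real k - 1)"
    unfolding X_def using keyr pos by (simp add: divide_le_eq)
  have part1: "sqrt X + 1/2 \<le> real k"
  proof -
    have "sqrt X \<le> real k - 1/2"
    proof (rule real_le_lsqrt)
      show "0 \<le> real k - 1/2" using k1 by simp
      show "X \<le> (real k - 1/2)^2" using XL by (simp add: power2_eq_square algebra_simps)
    qed
    thus ?thesis by simp
  qed
  have Npos: "N \<ge> 1" by (simp add: N_def)
  have Xeq: "X = N + N / real (2*p+1)"
    unfolding X_def using pos by (simp add: field_simps)
  have nN: "real n = 2 * N" by (simp add: n_def N_def)
  have sq: "sqrt (real n) \<le> 4 * N / real (2*p+1)"
  proof (rule real_le_lsqrt)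
    show "0 \<le> 4 * N / real (2*p+1)" using Npos by simp
    have "real ((2*p+1)^2) \<le> real (8 * (p^2+p+1))" by (simp only: of_nat_le_iff) (simp add: power2_eq_square algebra_simps)
    hence A: "(real (2*p+1))^2 \<le> 8 * N" by (simp add: N_def)
    have "real n * (real (2*p+1))^2 \<le> 2 * N * (8 * N)"
      using A Npos by (simp add: nN mult_left_mono)
    hence B: "real n * (real (2*p+1))^2 \<le> 16 * N * N" by (simp add: algebra_simps)
    have d2: "(real (2*p+1))^2 > 0" using pos by simp
    have "(4 * N / real (2*p+1))^2 = (16 * N * N) / (real (2*p+1))^2"
      by (simp only: power_divide) (simp add: power2_eq_square)
    moreover have "real n \<le> (16 * N * N) / (real (2*p+1))^2"
      using B d2 by (simp only: pos_le_divide_eq)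
    ultimately show "real n \<le> (4 * N / real (2*p+1))^2" by simp
  qed
  have "real n / 2 + sqrt (real n) / 4 \<le> X"
  proof -
    have "sqrt (real n) / 4 \<le> (4 * N / real (2*p+1)) / 4" using sq by (rule divide_right_mono) simp
    also have "\<dots> = N / real (2*p+1)" using pos by (simp add: field_simps)
    finally have s4: "sqrt (real n) / 4 \<le> N / real (2*p+1)" .
    have "real n / 2 = N" using nN by simp
    thus ?thesis using s4 Xeq by linarith
  qed
  hence part2: "sqrt (real n / 2 + sqrt (real n) / 4) \<le> sqrt X" by (rule real_sqrt_le_mono)
  show ?thesis using part1 part2
    unfolding X_def N_def k_def V_def E_def by simp
qed

end
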